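(* Consider the Cucker–Smale model with bonding force $$\dot{\mathbf{x}}_i=\mathbf{v}_i,\qquad \dot{\mathbf{v}}_i=\frac{\kappa_0}{N}\sum_{j=1}^N\psi(\|\mathbf{x}_j-\mathbf{x}_i\|)(\mathbf{v}_j-\mathbf{v}_i)+\frac{\kappa_1}{N}\sum_{j\ne i}\Big\langle\mathbf{v}_j-\mathbf{v}_i,\frac{\mathbf{x}_j-\mathbf{x}_i}{\|\mathbf{x}_j-\mathbf{x}_i\|}\Big\rangle\frac{\mathbf{x}_j-\mathbf{x}_i}{\|\mathbf{x}_j-\mathbf{x}_i\|}+\frac{\kappa_2}{N}\sum_{j\ne i}\big(\|\mathbf{x}_j-\mathbf{x}_i\|-d^\infty_{ij}\big)\frac{\mathbf{x}_j-\mathbf{x}_i}{\|\mathbf{x}_j-\mathbf{x}_i\|}.$$ Suppose the initial data and parameters satisfy $$\min_{i\ne j}\|\mathbf{x}_i^0-\mathbf{x}_j^0\|>0,\quad \min_{i\ne j}d^\infty_{ij}>\sqrt{\frac{2NE(0)}{\kappa_2}},\quad (X^0,V^0)\in S,\quad \kappa_0>0,\ \kappa_1>0,\ \kappa_2>0,$$ and for $\tau\in(0,\infty]$ let $\{(\mathbf{x}_i,\mathbf{v}_i)\}$ be a smooth solution on $[0,\tau)$. Then for all $i\ne j$ and all $t\in[0,\tau)$, $$0<L\le\|\mathbf{x}_i(t)-\mathbf{x}_j(t)\|\le U.$$ In particular no finite-time collisions occur.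
   Context: $N\ge2$, $d\ge1$, Euclidean norm and inner product on $\mathbb{R}^d$; $[d^\infty_{ij}]$ real $N\times N$ matrix with $d^\infty_{ii}=0$, $d^\infty_{ij}=d^\infty_{ji}$; $(X^0,V^0)=(\mathbf{x}_i(0),\mathbf{v}_i(0))_i$. Energy: $E:=\frac12\sum_i\|\mathbf{v}_i\|^2+\frac{\kappa_2}{4N}\sum_{i,j}(\|\mathbf{x}_j-\mathbf{x}_i\|-d^\infty_{ij})^2$. $U:=\max_{i\ne j}d^\infty_{ij}+\sqrt{2NE(0)/\kappa_2}$, $L:=\min_{i\ne j}d^\infty_{ij}-\sqrt{2NE(0)/\kappa_2}$, $S:=\{(X,V)\in\mathbb{R}^{2dN}:\max_{i\ne j}\|\mathbf{x}_i-\mathbf{x}_j\|\le U\}$. The weight $\psi:[0,\infty)\to[0,\infty)$ is locally Lipschitz with $0\le\psi(r)\le\psi_M$ for all $r\ge0$ and $\psi_m:=\min_{r\in[0,U]}\psi(r)>0$. A smooth solution is a $C^1$ solution with $\mathbf{x}_i(t)\ne\mathbf{x}_j(t)$ for $i\ne j$. *)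

theory Defs
  imports "HOL-Analysis.Analysis"
begin

definition energy :: "nat \<Rightarrow> real \<Rightarrow> (nat \<Rightarrow> nat \<Rightarrow> real) \<Rightarrow> (nat \<Rightarrow> 'a::euclidean_space) \<Rightarrow> (nat \<Rightarrow> 'a) \<Rightarrow> real" where
  "energy N \<kappa>2 dinf X V =
     1/2 * (\<Sum>i<N. (norm (V i))^2)
     + \<kappa>2 / (4 * real N) * (\<Sum>i<N. \<Sum>j<N. (norm (X j - X i) - dinf i j)^2)"

definition max_offdiag :: "nat \<Rightarrow> (nat \<Rightarrow> nat \<Rightarrow> real) \<Rightarrow> real" where
  "max_offdiag N a = Max {a i j | i j. i < N \<and> j < N \<and> i \<noteq> j}"

definition min_offdiag :: "nat \<Rightarrow> (nat \<Rightarrow> nat \<Rightarrow> real) \<Rightarrow> real" where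
  "min_offdiag N a = Min {a i j | i j. i < N \<and> j < N \<and> i \<noteq> j}"

definition Ubound :: "nat \<Rightarrow> real \<Rightarrow> (nat \<Rightarrow> nat \<Rightarrow> real) \<Rightarrow> real \<Rightarrow> real" where
  "Ubound N \<kappa>2 dinf E0 = max_offdiag N dinf + sqrt (2 * real N * E0 / \<kappa>2)"

definition Lbound :: "nat \<Rightarrow> real \<Rightarrow> (nat \<Rightarrow> nat \<Rightarrow> real) \<Rightarrow> real \<Rightarrow> real" where
  "Lbound N \<kappa>2 dinf E0 = min_offdiag N dinf - sqrt (2 * real N * E0 / \<kappa>2)"

definition in_S :: "nat \<Rightarrow> real \<Rightarrow> (nat \<Rightarrow> 'a::euclidean_space) \<Rightarrow> (nat \<Rightarrow> 'a) \<Rightarrow> bool" where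
  "in_S N U X V \<longleftrightarrow> max_offdiag N (\<lambda>i j. norm (X i - X j)) \<le> U"

definition cs_force :: "nat \<Rightarrow> real \<Rightarrow> real \<Rightarrow> real \<Rightarrow> (real \<Rightarrow> real) \<Rightarrow> (nat \<Rightarrow> nat \<Rightarrow> real)
    \<Rightarrow> (nat \<Rightarrow> 'a::euclidean_space) \<Rightarrow> (nat \<Rightarrow> 'a) \<Rightarrow> nat \<Rightarrow> 'a" where
  "cs_force N \<kappa>0 \<kappa>1 \<kappa>2 \<psi> dinf X V i =
     (\<kappa>0 / real N) *\<^sub>R (\<Sum>j<N. \<psi> (norm (X j - X i)) *\<^sub>R (V j - V i))
   + (\<kappa>1 / real N) *\<^sub>R (\<Sum>j\<in>{..<N} - {i}.
        ((V j - V i) \<bullet> ((1 / norm (X j - X i)) *\<^sub>R (X j - X i))) *\<^sub>R ((1 / norm (X j - X i)) *\<^sub>R (X j - X i)))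
   + (\<kappa>2 / real N) *\<^sub>R (\<Sum>j\<in>{..<N} - {i}.
        (norm (X j - X i) - dinf i j) *\<^sub>R ((1 / norm (X j - X i)) *\<^sub>R (X j - X i)))"

definition loc_lipschitz_nonneg :: "(real \<Rightarrow> real) \<Rightarrow> bool" where
  "loc_lipschitz_nonneg \<psi> \<longleftrightarrow> (\<forall>b\<ge>0. \<exists>K. K-lipschitz_on {0..b} \<psi>)"

definition smooth_solution :: "nat \<Rightarrow> real \<Rightarrow> real \<Rightarrow> real \<Rightarrow> (real \<Rightarrow> real) \<Rightarrow> (nat \<Rightarrow> nat \<Rightarrow> real)
    \<Rightarrow> ereal \<Rightarrow> (nat \<Rightarrow> real \<Rightarrow> 'a::euclidean_space) \<Rightarrow> (nat \<Rightarrow> real \<Rightarrow> 'a) \<Rightarrow> bool" where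
  "smooth_solution N \<kappa>0 \<kappa>1 \<kappa>2 \<psi> dinf \<tau> x v \<longleftrightarrow>
     (let T = {t. 0 \<le> t \<and> ereal t < \<tau>} in
      (\<forall>i<N. \<forall>t\<in>T. (x i has_vector_derivative v i t) (at t within T)) \<and>
      (\<forall>i<N. \<forall>t\<in>T. (v i has_vector_derivative
           cs_force N \<kappa>0 \<kappa>1 \<kappa>2 \<psi> dinf (\<lambda>j. x j t) (\<lambda>j. v j t) i) (at t within T)) \<and>
      (\<forall>i<N. continuous_on T (x i) \<and> continuous_on T (v i)) \<and>
      (\<forall>i<N. continuous_on T (\<lambda>t. cs_force N \<kappa>0 \<kappa>1 \<kappa>2 \<psi> dinf (\<lambda>j. x j t) (\<lambda>j. v j t) i)) \<and>
      (\<forall>i<N. \<forall>j<N. i \<noteq> j \<longrightarrow> (\<forall>t\<in>T. x i t \<noteq> x j t)))"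

end

theory Submission
  imports Defs
begin

lemma inner_vderiv:
  fixes a b :: "real \<Rightarrow> 'a::real_inner"
  assumes "(a has_vector_derivative a') (at s within T)" "(b has_vector_derivative b') (at s within T)"
  shows "((\<lambda>t. a t \<bullet> b t) has_real_derivative (a s \<bullet> b' + a' \<bullet> b s)) (at s within T)"
proof -
  have "((\<lambda>t. a t \<bullet> b t) has_derivative (\<lambda>h. a s \<bullet> (h *\<^sub>R b') + (h *\<^sub>R a') \<bullet> b s)) (at s within T)"
    using has_derivative_inner[OF assms[unfolded has_vector_derivative_def]] .
  moreover have "(\<lambda>h. a s \<bullet> (h *\<^sub>R b') + (h *\<^sub>R a') \<bullet> b s) = (*) (a s \<bullet> b' + a' \<bullet> b s)"
    by (auto simp: fun_eq_iff algebra_simps)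
  ultimately show ?thesis unfolding has_field_derivative_def by simp
qed

lemma norm_diff_vderiv:
  fixes a b :: "real \<Rightarrow> 'a::real_inner"
  assumes "(a has_vector_derivative a') (at s within T)" "(b has_vector_derivative b') (at s within T)"
    and ne: "a s \<noteq> b s"
  shows "((\<lambda>t. norm (a t - b t)) has_real_derivative ((a s - b s) \<bullet> (a' - b') / norm (a s - b s))) (at s within T)"
proof -
  have d: "((\<lambda>t. a t - b t) has_vector_derivative (a' - b')) (at s within T)"
    using assms by (intro derivative_intros)
  have i: "((\<lambda>t. (a t - b t) \<bullet> (a t - b t)) has_real_derivative (2 * ((a s - b s) \<bullet> (a' - b')))) (at s within T)"
    using inner_vderiv[OF d d] by (simp add: inner_commute)
  have pos: "0 < (a s - b s) \<bullet> (a s - b s)" using ne by simp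
  have "((\<lambda>t. sqrt ((a t - b t) \<bullet> (a t - b t))) has_real_derivative
     (2 * ((a s - b s) \<bullet> (a' - b'))) / (2 * sqrt ((a s - b s) \<bullet> (a s - b s)))) (at s within T)"
    using DERIV_chain2[OF DERIV_real_sqrt[OF pos] i] by (simp add: divide_simps mult.commute)
  then show ?thesis by (simp add: norm_eq_sqrt_inner[symmetric])
qed

lemma antisym_sum:
  fixes g :: "nat \<Rightarrow> nat \<Rightarrow> 'a::real_inner" and v :: "nat \<Rightarrow> 'a"
  assumes "\<forall>i<N. \<forall>j<N. g j i = - g i j"
  shows "(\<Sum>i<N. \<Sum>j<N. v i \<bullet> g i j) = -(1/2) * (\<Sum>i<N. \<Sum>j<N. (v j - v i) \<bullet> g i j)"
proof -
  have "(\<Sum>i<N. \<Sum>j<N. v i \<bullet> g i j) = (\<Sum>j<N. \<Sum>i<N. v i \<bullet> g i j)" by (rule sum.swap)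
  also have "\<dots> = (\<Sum>j<N. \<Sum>i<N. - (v i \<bullet> g j i))"
  proof (intro sum.cong refl)
    fix j i assume "j \<in> {..<N}" "i \<in> {..<N}"
    then have "g i j = - g j i" using assms by blast
    then show "v i \<bullet> g i j = - (v i \<bullet> g j i)" by simp
  qed
  finally have e: "(\<Sum>i<N. \<Sum>j<N. v i \<bullet> g i j) = - (\<Sum>i<N. \<Sum>j<N. v j \<bullet> g i j)"
    by (simp add: sum_negf)
  have "(\<Sum>i<N. \<Sum>j<N. (v j - v i) \<bullet> g i j) = (\<Sum>i<N. \<Sum>j<N. v j \<bullet> g i j) - (\<Sum>i<N. \<Sum>j<N. v i \<bullet> g i j)"
    by (simp add: inner_diff_left sum_subtractf)
  then show ?thesis using e by simp
qed

lemma sum_remove_zero: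
  fixes f :: "nat \<Rightarrow> 'a::ab_group_add"
  assumes "i < N" "f i = 0"
  shows "(\<Sum>j\<in>{..<N} - {i}. f j) = (\<Sum>j<N. f j)"
  using sum.remove[of "{..<N}" i f] assms by simp

lemma force_dissip:
  fixes x v :: "nat \<Rightarrow> 'a::euclidean_space" and \<psi> :: "real \<Rightarrow> real"
  assumes dsym: "\<forall>i<N. \<forall>j<N. dinf i j = dinf j i"
    and psi: "\<forall>r\<ge>0. 0 \<le> \<psi> r" and k0: "\<kappa>0 > 0" and k1: "\<kappa>1 > 0" and k2: "\<kappa>2 > 0"
  shows "(\<Sum>i<N. v i \<bullet> cs_force N \<kappa>0 \<kappa>1 \<kappa>2 \<psi> dinf x v i)
     + \<kappa>2 / (4 * real N) * (\<Sum>i<N. \<Sum>j<N. 2 * (norm (x j - x i) - dinf i j) *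
          ((x j - x i) \<bullet> (v j - v i) / norm (x j - x i))) \<le> 0"
proof -
  define e where "e i j = (1 / norm (x j - x i)) *\<^sub>R (x j - x i)" for i j
  define g0 where "g0 i j = \<psi> (norm (x j - x i)) *\<^sub>R (v j - v i)" for i j
  define g1 where "g1 i j = ((v j - v i) \<bullet> e i j) *\<^sub>R e i j" for i j
  define g2 where "g2 i j = (norm (x j - x i) - dinf i j) *\<^sub>R e i j" for i j
  have eneg: "e j i = - e i j" for i j
    unfolding e_def by (simp add: norm_minus_commute) (metis minus_diff_eq scaleR_minus_right)
  have a0: "\<forall>i<N. \<forall>j<N. g0 j i = - g0 i j"
    unfolding g0_def by (simp add: norm_minus_commute algebra_simps)
  have a1: "\<forall>i<N. \<forall>j<N. g1 j i = - g1 i j"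
  proof (intro allI impI)
    fix i j show "g1 j i = - g1 i j" unfolding g1_def eneg[of i j] by (simp add: algebra_simps)
  qed
  have a2: "\<forall>i<N. \<forall>j<N. g2 j i = - g2 i j"
  proof (intro allI impI)
    fix i j assume "i < N" "j < N"
    then have "dinf j i = dinf i j" using dsym by simp
    then show "g2 j i = - g2 i j" unfolding g2_def eneg[of i j]
      by (simp add: norm_minus_commute)
  qed
  have F: "cs_force N \<kappa>0 \<kappa>1 \<kappa>2 \<psi> dinf x v i =
      (\<kappa>0 / real N) *\<^sub>R (\<Sum>j<N. g0 i j) + (\<kappa>1 / real N) *\<^sub>R (\<Sum>j<N. g1 i j)
      + (\<kappa>2 / real N) *\<^sub>R (\<Sum>j<N. g2 i j)" if "i < N" for i
  proof -
    have "(\<Sum>j\<in>{..<N} - {i}. g1 i j) = (\<Sum>j<N. g1 i j)"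
      by (rule sum_remove_zero[OF that]) (simp add: g1_def e_def)
    moreover have "(\<Sum>j\<in>{..<N} - {i}. g2 i j) = (\<Sum>j<N. g2 i j)"
      by (rule sum_remove_zero[OF that]) (simp add: g2_def e_def)
    ultimately show ?thesis unfolding cs_force_def g0_def g1_def g2_def e_def by simp
  qed
  define A where "A = \<kappa>0 / real N"
  define B where "B = \<kappa>1 / real N"
  define C where "C = \<kappa>2 / real N"
  have "(\<Sum>i<N. v i \<bullet> cs_force N \<kappa>0 \<kappa>1 \<kappa>2 \<psi> dinf x v i) =
     (\<Sum>i<N. A * (\<Sum>j<N. v i \<bullet> g0 i j) + B * (\<Sum>j<N. v i \<bullet> g1 i j) + C * (\<Sum>j<N. v i \<bullet> g2 i j))"
    by (intro sum.cong refl) (simp add: F A_def B_def C_def inner_add_right inner_sum_right)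
  also have "\<dots> = A * (\<Sum>i<N. \<Sum>j<N. v i \<bullet> g0 i j) + B * (\<Sum>i<N. \<Sum>j<N. v i \<bullet> g1 i j)
      + C * (\<Sum>i<N. \<Sum>j<N. v i \<bullet> g2 i j)"
    by (simp add: sum.distrib sum_distrib_left)
  also have "\<dots> = -(1/2) * (A * (\<Sum>i<N. \<Sum>j<N. (v j - v i) \<bullet> g0 i j) + B * (\<Sum>i<N. \<Sum>j<N. (v j - v i) \<bullet> g1 i j)
      + C * (\<Sum>i<N. \<Sum>j<N. (v j - v i) \<bullet> g2 i j))"
    unfolding antisym_sum[OF a0] antisym_sum[OF a1] antisym_sum[OF a2] by (simp add: algebra_simps)
  finally have S: "(\<Sum>i<N. v i \<bullet> cs_force N \<kappa>0 \<kappa>1 \<kappa>2 \<psi> dinf x v i) = \<dots>" .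
  have X0: "0 \<le> (\<Sum>i<N. \<Sum>j<N. (v j - v i) \<bullet> g0 i j)"
    unfolding g0_def using psi by (intro sum_nonneg) simp
  have X1: "0 \<le> (\<Sum>i<N. \<Sum>j<N. (v j - v i) \<bullet> g1 i j)"
    unfolding g1_def by (intro sum_nonneg) simp
  have X2: "(\<Sum>i<N. \<Sum>j<N. (v j - v i) \<bullet> g2 i j) = (\<Sum>i<N. \<Sum>j<N. (norm (x j - x i) - dinf i j) *
          ((x j - x i) \<bullet> (v j - v i) / norm (x j - x i)))"
  proof -
    have pw: "w \<bullet> (c *\<^sub>R ((1 / r) *\<^sub>R d)) = c * (d \<bullet> w / r)" for w d :: 'a and c r :: real
      by (simp add: inner_commute[of w d])
    show ?thesis unfolding g2_def e_def pw by (rule refl)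
  qed
  have P: "\<kappa>2 / (4 * real N) * (\<Sum>i<N. \<Sum>j<N. 2 * (norm (x j - x i) - dinf i j) *
          ((x j - x i) \<bullet> (v j - v i) / norm (x j - x i)))
     = C / 2 * (\<Sum>i<N. \<Sum>j<N. (norm (x j - x i) - dinf i j) *
          ((x j - x i) \<bullet> (v j - v i) / norm (x j - x i)))"
  proof -
    have e2: "2 * a * b = 2 * (a * b)" for a b :: real by simp
    have "(\<Sum>i<N. \<Sum>j<N. 2 * (norm (x j - x i) - dinf i j) *
          ((x j - x i) \<bullet> (v j - v i) / norm (x j - x i))) = 2 * (\<Sum>i<N. \<Sum>j<N. (norm (x j - x i) - dinf i j) *
          ((x j - x i) \<bullet> (v j - v i) / norm (x j - x i)))"
      by (simp only: e2 sum_distrib_left[symmetric])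
    then show ?thesis unfolding C_def by simp
  qed
  have "0 \<le> A" "0 \<le> B" unfolding A_def B_def using k0 k1 by auto
  define Y0 where "Y0 = (\<Sum>i<N. \<Sum>j<N. (v j - v i) \<bullet> g0 i j)"
  define Y1 where "Y1 = (\<Sum>i<N. \<Sum>j<N. (v j - v i) \<bullet> g1 i j)"
  define Y2 where "Y2 = (\<Sum>i<N. \<Sum>j<N. (v j - v i) \<bullet> g2 i j)"
  have "0 \<le> A * Y0" "0 \<le> B * Y1" using X0 X1 \<open>0 \<le> A\<close> \<open>0 \<le> B\<close>
    unfolding Y0_def Y1_def by simp_all
  then show ?thesis unfolding S P X2[symmetric] Y0_def[symmetric] Y1_def[symmetric] Y2_def[symmetric]
  proof -
    have "-(1/2)*(A*Y0+B*Y1+C*Y2) + C/2*Y2 = -(1/2)*(A*Y0+B*Y1)" by (simp add: algebra_simps)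
    moreover have "0 \<le> A*Y0 + B*Y1" using \<open>0 \<le> A * Y0\<close> \<open>0 \<le> B * Y1\<close> by (rule add_nonneg_nonneg)
    ultimately show "-(1/2)*(A*Y0+B*Y1+C*Y2) + C/2*Y2 \<le> 0" by simp
  qed
qed
lemma fin_offdiag: "finite {a i j | i j. i < N \<and> j < N \<and> i \<noteq> j}" for a :: "nat \<Rightarrow> nat \<Rightarrow> real"
proof -
  have "{a i j | i j. i < N \<and> j < N \<and> i \<noteq> j} \<subseteq> {a i j | i j. i \<in> {..<N} \<and> j \<in> {..<N}}" by blast
  moreover have "finite {a i j | i j. i \<in> {..<N} \<and> j \<in> {..<N}}"
    using finite_image_set2[of "\<lambda>i. i \<in> {..<N}" "\<lambda>j. j \<in> {..<N}" a] by simp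
  ultimately show ?thesis by (rule finite_subset)
qed

theorem theorem4p1:
  fixes N :: nat and \<kappa>0 \<kappa>1 \<kappa>2 \<psi>M :: real and \<psi> :: "real \<Rightarrow> real"
    and dinf :: "nat \<Rightarrow> nat \<Rightarrow> real" and \<tau> :: ereal
    and x v :: "nat \<Rightarrow> real \<Rightarrow> 'a::euclidean_space"
  defines "E0 \<equiv> energy N \<kappa>2 dinf (\<lambda>i. x i 0) (\<lambda>i. v i 0)"
  defines "U \<equiv> Ubound N \<kappa>2 dinf E0"
  defines "L \<equiv> Lbound N \<kappa>2 dinf E0"
  assumes N2: "N \<ge> 2"
    and dinf_diag: "\<forall>i<N. dinf i i = 0"
    and dinf_sym: "\<forall>i<N. \<forall>j<N. dinf i j = dinf j i"
    and psi_lip: "loc_lipschitz_nonneg \<psi>"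
    and psi_bdd: "\<forall>r\<ge>0. 0 \<le> \<psi> r \<and> \<psi> r \<le> \<psi>M"
    and psi_min: "(INF r\<in>{0..U}. \<psi> r) > 0"
    and init_sep: "min_offdiag N (\<lambda>i j. norm (x i 0 - x j 0)) > 0"
    and dinf_big: "min_offdiag N dinf > sqrt (2 * real N * E0 / \<kappa>2)"
    and init_S: "in_S N U (\<lambda>i. x i 0) (\<lambda>i. v i 0)"
    and k0: "\<kappa>0 > 0" and k1: "\<kappa>1 > 0" and k2: "\<kappa>2 > 0"
    and tau: "\<tau> > 0"
    and sol: "smooth_solution N \<kappa>0 \<kappa>1 \<kappa>2 \<psi> dinf \<tau> x v"
  shows "\<forall>i<N. \<forall>j<N. i \<noteq> j \<longrightarrow> (\<forall>t. 0 \<le> t \<and> ereal t < \<tau> \<longrightarrow>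
           0 < L \<and> L \<le> norm (x i t - x j t) \<and> norm (x i t - x j t) \<le> U)"
proof -
  define T where "T = {t. 0 \<le> t \<and> ereal t < \<tau>}"
  define F where "F i t = cs_force N \<kappa>0 \<kappa>1 \<kappa>2 \<psi> dinf (\<lambda>j. x j t) (\<lambda>j. v j t) i" for i t
  define Ef where "Ef t = energy N \<kappa>2 dinf (\<lambda>i. x i t) (\<lambda>i. v i t)" for t
  define P' where "P' i j t = 2 * (norm (x j t - x i t) - dinf i j) *
          ((x j t - x i t) \<bullet> (v j t - v i t) / norm (x j t - x i t))" for i j t
  define D where "D t = (\<Sum>i<N. v i t \<bullet> F i t) + \<kappa>2 / (4 * real N) * (\<Sum>i<N. \<Sum>j<N. P' i j t)" for t
  have dx: "\<And>i t. i < N \<Longrightarrow> t \<in> T \<Longrightarrow> (x i has_vector_derivative v i t) (at t within T)"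
    and dv: "\<And>i t. i < N \<Longrightarrow> t \<in> T \<Longrightarrow> (v i has_vector_derivative F i t) (at t within T)"
    and nc: "\<And>i j t. i < N \<Longrightarrow> j < N \<Longrightarrow> i \<noteq> j \<Longrightarrow> t \<in> T \<Longrightarrow> x i t \<noteq> x j t"
    using sol unfolding smooth_solution_def Let_def T_def F_def by blast+
  have deriv: "(Ef has_real_derivative D s) (at s within T)" if s: "s \<in> T" for s
  proof -
    have K: "((\<lambda>t. (norm (v i t))^2) has_real_derivative 2 * (v i s \<bullet> F i s)) (at s within T)"
      if "i < N" for i
      using inner_vderiv[OF dv[OF that s] dv[OF that s]] by (simp add: power2_norm_eq_inner inner_commute)
    have Pd: "((\<lambda>t. (norm (x j t - x i t) - dinf i j)^2) has_real_derivative P' i j s) (at s within T)"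
      if "i < N" "j < N" for i j
    proof (cases "i = j")
      case True
      then show ?thesis unfolding P'_def by simp
    next
      case False
      have r: "((\<lambda>t. norm (x j t - x i t)) has_real_derivative
          ((x j s - x i s) \<bullet> (v j s - v i s) / norm (x j s - x i s))) (at s within T)"
        by (rule norm_diff_vderiv[OF dx[OF that(2) s] dx[OF that(1) s]]) (use nc[OF that False s] in auto)
      have q: "((\<lambda>t. norm (x j t - x i t) - dinf i j) has_real_derivative
          ((x j s - x i s) \<bullet> (v j s - v i s) / norm (x j s - x i s))) (at s within T)"
        using DERIV_diff[OF r DERIV_const[of "dinf i j"]] by simp
      show ?thesis unfolding power2_eq_square P'_def
        by (rule DERIV_cong[OF DERIV_mult[OF q q]]) (simp add: algebra_simps)
    qed
    have "(Ef has_real_derivative (1/2 * (\<Sum>i<N. 2 * (v i s \<bullet> F i s)) +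
        \<kappa>2 / (4 * real N) * (\<Sum>i<N. \<Sum>j<N. P' i j s))) (at s within T)"
      unfolding Ef_def[abs_def] energy_def
      by (intro DERIV_add DERIV_cmult DERIV_sum K Pd) auto
    then show ?thesis unfolding D_def by (simp add: sum_distrib_left[symmetric])
  qed
  have psi0: "\<forall>r\<ge>0. 0 \<le> \<psi> r" using psi_bdd by auto
  have Dneg: "D s \<le> 0" for s
    unfolding D_def F_def P'_def by (rule force_dissip[OF dinf_sym psi0 k0 k1 k2])
  have Emono: "Ef t \<le> Ef 0" if t: "t \<in> T" for t
  proof (cases "t = 0")
    case True then show ?thesis by simp
  next
    case False
    then have tpos: "0 < t" using t unfolding T_def by auto
    have sub: "{0..t} \<subseteq> T" using t unfolding T_def
      by auto (meson ereal_less_eq(3) le_less_trans)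
    have cont: "continuous_on {0..t} Ef"
      by (rule continuous_on_subset[OF DERIV_continuous_on[OF deriv] sub])
    show ?thesis
    proof (rule DERIV_nonpos_imp_decreasing_open[OF less_imp_le[OF tpos] _ cont])
      fix y assume y: "0 < y" "y < t"
      have "{0<..<t} \<subseteq> interior T"
        by (rule interior_maximal) (use sub in auto)
      then have "y \<in> interior T" using y by auto
      have yT: "y \<in> T" using sub y by auto
      have "at y within T = at y" by (rule at_within_interior) fact
      then have "(Ef has_real_derivative D y) (at y)"
        using deriv[OF yT] by simp
      then show "\<exists>z. (Ef has_real_derivative z) (at y) \<and> z \<le> 0" using Dneg by blast
    qed
  qed
  have E0eq: "Ef 0 = E0" unfolding Ef_def E0_def by simp
  have bnd: "\<bar>norm (x i t - x j t) - dinf i j\<bar> \<le> sqrt (2 * real N * E0 / \<kappa>2)"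
    if ij: "i < N" "j < N" "i \<noteq> j" and t: "t \<in> T" for i j t
  proof -
    define Q where "Q k l = (norm (x l t - x k t) - dinf k l)^2" for k l
    have Qn: "0 \<le> Q k l" for k l unfolding Q_def by simp
    have Qs: "Q j i = Q i j" unfolding Q_def using dinf_sym ij by (simp add: norm_minus_commute)
    have "Q i j + Q j i \<le> (\<Sum>l<N. Q i l) + (\<Sum>l<N. Q j l)"
      using ij by (intro add_mono member_le_sum) (auto simp: Qn)
    also have "\<dots> = (\<Sum>k\<in>{i,j}. \<Sum>l<N. Q k l)" using ij by simp
    also have "\<dots> \<le> (\<Sum>k<N. \<Sum>l<N. Q k l)"
      using ij by (intro sum_mono2) (auto intro: sum_nonneg Qn)
    finally have "2 * Q i j \<le> (\<Sum>k<N. \<Sum>l<N. Q k l)" using Qs by simp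
    moreover have "\<kappa>2 / (4 * real N) * (\<Sum>k<N. \<Sum>l<N. Q k l) \<le> Ef t"
      unfolding Ef_def energy_def Q_def by (simp add: sum_nonneg)
    moreover have "Ef t \<le> E0" using Emono[OF t] E0eq by simp
    moreover have Npos: "real N > 0" using N2 by simp
    ultimately have "\<kappa>2 / (4 * real N) * (2 * Q i j) \<le> E0"
      using k2 by (smt (verit) divide_nonneg_nonneg mult_left_mono of_nat_0_le_iff)
    then have "Q i j \<le> 2 * real N * E0 / \<kappa>2" using k2 Npos
      by (simp add: field_simps)
    then have "(norm (x i t - x j t) - dinf i j)^2 \<le> 2 * real N * E0 / \<kappa>2"
      unfolding Q_def by (simp add: norm_minus_commute)
    then show ?thesis using real_sqrt_le_mono by fastforce
  qed
  show ?thesis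
  proof (intro allI impI)
    fix i j t assume ij: "i < N" "j < N" "i \<noteq> j" and t: "0 \<le> t \<and> ereal t < \<tau>"
    have tT: "t \<in> T" using t unfolding T_def by simp
    have mx: "dinf i j \<le> max_offdiag N dinf" unfolding max_offdiag_def
      using ij by (intro Max_ge fin_offdiag) auto
    have mn: "min_offdiag N dinf \<le> dinf i j" unfolding min_offdiag_def
      using ij by (intro Min_le fin_offdiag) auto
    have "0 < L" unfolding L_def Lbound_def using dinf_big by simp
    moreover have "L \<le> norm (x i t - x j t)" unfolding L_def Lbound_def
      using bnd[OF ij tT] mn by linarith
    moreover have "norm (x i t - x j t) \<le> U" unfolding U_def Ubound_def
      using bnd[OF ij tT] mx by linarith
    ultimately show "0 < L \<and> L \<le> norm (x i t - x j t) \<and> norm (x i t - x j t) \<le> U" by simp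
  qed
qed

end
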